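(* Let $q$ be a power of a prime with $q>2$. Then there is a right conjugacy closed loop of order $q^2-1$ whose right multiplication group is isomorphic to $\mathrm{GL}(2,q)$.
   Context: For a finite loop $\mathcal{L}$ the right multiplication group is the permutation group generated by the maps $R_a\colon x\mapsto xa$, $a\in\mathcal{L}$. The loop is right conjugacy closed if $\{R_a\mid a\in\mathcal{L}\}$ is closed under conjugation by its own elements. *)

theory Defs
  imports "HOL-Analysis.Determinants" "HOL-Algebra.Bij" "HOL-Algebra.Generated_Groups"
begin

definition is_loop :: "'c set \<Rightarrow> ('c \<Rightarrow> 'c \<Rightarrow> 'c) \<Rightarrow> bool" where
  "is_loop L m \<longleftrightarrow>
     (\<forall>x\<in>L. \<forall>y\<in>L. m x y \<in> L) \<and>
     (\<exists>e\<in>L. \<forall>x\<in>L. m e x = x \<and> m x e = x) \<and>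
     (\<forall>a\<in>L. \<forall>b\<in>L. \<exists>!x. x \<in> L \<and> m a x = b) \<and>
     (\<forall>a\<in>L. \<forall>b\<in>L. \<exists>!y. y \<in> L \<and> m y a = b)"

definition right_transl :: "'c set \<Rightarrow> ('c \<Rightarrow> 'c \<Rightarrow> 'c) \<Rightarrow> 'c \<Rightarrow> ('c \<Rightarrow> 'c)" where
  "right_transl L m a = restrict (\<lambda>x. m x a) L"

definition right_transls :: "'c set \<Rightarrow> ('c \<Rightarrow> 'c \<Rightarrow> 'c) \<Rightarrow> ('c \<Rightarrow> 'c) set" where
  "right_transls L m = right_transl L m ` L"

definition right_mult_group :: "'c set \<Rightarrow> ('c \<Rightarrow> 'c \<Rightarrow> 'c) \<Rightarrow> ('c \<Rightarrow> 'c) monoid" where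
  "right_mult_group L m =
     (BijGroup L) \<lparr> carrier := generate (BijGroup L) (right_transls L m) \<rparr>"

definition right_conj_closed :: "'c set \<Rightarrow> ('c \<Rightarrow> 'c \<Rightarrow> 'c) \<Rightarrow> bool" where
  "right_conj_closed L m \<longleftrightarrow>
     (\<forall>r\<in>right_transls L m. \<forall>s\<in>right_transls L m.
        inv\<^bsub>BijGroup L\<^esub> s \<otimes>\<^bsub>BijGroup L\<^esub> r \<otimes>\<^bsub>BijGroup L\<^esub> s \<in> right_transls L m)"

definition GL2 :: "('a::field ^ 2 ^ 2) monoid" where
  "GL2 = \<lparr> carrier = {A. det A \<noteq> 0}, mult = (\<lambda>A B. A ** B), one = mat 1 \<rparr>"

end

theory Submission
  imports Defs
begin


definition mk :: "'a::field \<Rightarrow> 'a \<Rightarrow> 'a \<Rightarrow> 'a \<Rightarrow> 'a^2^2" where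
  "mk p q r s = (\<chi> i j. if i = 1 then (if j = 1 then p else q) else (if j = 1 then r else s))"

definition v2 :: "'a::field \<Rightarrow> 'a \<Rightarrow> 'a^2" where
  "v2 x y = (\<chi> i. if i = 1 then x else y)"

lemma two_ne: "(1::2) \<noteq> 2" by simp

lemma mk_nth[simp]: "mk p q r s $ 1 $ 1 = p" "mk p q r s $ 1 $ 2 = q"
  "mk p q r s $ 2 $ 1 = r" "mk p q r s $ 2 $ 2 = s"
  by (simp_all add: mk_def)

lemma v2_nth[simp]: "v2 x y $ 1 = x" "v2 x y $ 2 = y"
  by (simp_all add: v2_def)

lemma mk_eta: "A = mk (A$1$1) (A$1$2) (A$2$1) (A$2$2)"
  unfolding mk_def vec_eq_iff by (simp add: forall_2)

lemma v2_eta: "v = v2 (v$1) (v$2)"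
  unfolding v2_def vec_eq_iff by (simp add: forall_2)

lemma mk_eq[simp]: "mk p q r s = mk p2 q2 r2 s2 \<longleftrightarrow> p = p2 \<and> q = q2 \<and> r = r2 \<and> s = s2"
  unfolding mk_def vec_eq_iff by (auto simp add: forall_2)

lemma v2_eq[simp]: "v2 x y = v2 x' y' \<longleftrightarrow> x = x' \<and> y = y'"
  unfolding v2_def vec_eq_iff by (auto simp add: forall_2)

lemma mk_mult: "mk p q r s ** mk p2 q2 r2 s2 = mk (p * p2 + q * r2) (p * q2 + q * s2) (r * p2 + s * r2) (r * q2 + s * s2)"
  unfolding matrix_matrix_mult_def mk_def vec_eq_iff
  by (simp add: sum_2 forall_2)

lemma mk_mulv: "mk p q r s *v v2 x y = v2 (p * x + q * y) (r * x + s * y)"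
  unfolding matrix_vector_mult_def mk_def v2_def vec_eq_iff
  by (simp add: sum_2 forall_2)

lemma det_mk: "det (mk p q r s) = p * s - q * r"
  by (simp add: det_2)

lemma mat1_mk: "mat 1 = mk 1 0 0 1"
  unfolding mk_def vec_eq_iff mat_def by (simp add: forall_2)

lemma v2_zero: "(0::'a::field^2) = v2 0 0"
  unfolding v2_def vec_eq_iff by (simp add: forall_2)


locale genS =
  fixes S :: "(('a::field)^2^2) set" and a c :: 'a
  assumes c0: "c \<noteq> 0"
    and noroot: "\<And>r. r * r - a * r + c \<noteq> 0"
    and sqc: "\<And>d. d \<noteq> 0 \<Longrightarrow> \<exists>z. d = z * z \<or> d = c * (z * z)"
    and hB: "(\<forall>\<mu>::'a. \<mu> \<noteq> 0 \<longrightarrow> \<mu> * \<mu> = 1) \<Longrightarrow> a \<noteq> 0 \<and> (2::'a) \<noteq> 0"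
    and mul: "\<And>A B. A \<in> S \<Longrightarrow> B \<in> S \<Longrightarrow> A ** B \<in> S"
    and lc: "\<And>M N X. M \<in> S \<Longrightarrow> N \<in> S \<Longrightarrow> M ** X = N \<Longrightarrow> X \<in> S"
    and rc: "\<And>A B X. B \<in> S \<Longrightarrow> A \<in> S \<Longrightarrow> X ** B = A \<Longrightarrow> X \<in> S"
    and sc: "\<And>l. l \<noteq> 0 \<Longrightarrow> mk l 0 0 l \<in> S"
    and cc: "\<And>p q r s. p + s = a \<Longrightarrow> p * s - q * r = c \<Longrightarrow> mk p q r s \<in> S"
begin

lemma scc: "l \<noteq> 0 \<Longrightarrow> p + s = a \<Longrightarrow> p * s - q * r = c \<Longrightarrow> mk (l * p) (l * q) (l * r) (l * s) \<in> S"
  using mul[OF sc cc, of l p s q r] by (simp add: mk_mult)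

lemma U_caseA:
  fixes \<mu> :: 'a
  assumes mu: "\<mu> \<noteq> 0" "\<mu> * \<mu> \<noteq> 1"
  shows "mk 1 x 0 1 \<in> S"
proof -
  define y where "y = \<mu> * \<mu>"
  have P: "mk 1 (a * (1 - \<mu>) - m * (1 - y)) 0 y \<in> S" for m
  proof -
    define s where "s = a * (1 - \<mu>) - m * (1 - y)"
    define l where "l = \<mu> / c"
    have M: "mk m (m * (a - m) - c) 1 (a - m) \<in> S" by (rule cc) (simp_all add: algebra_simps)
    have N: "mk (l * ((a - m) / \<mu>)) (l * (((a - m) * s + (c - m * (a - m)) * y) / \<mu>))
                (l * (-1 / \<mu>)) (l * ((m * y - s) / \<mu>)) \<in> S"
      apply (rule scc)
      using mu c0 unfolding l_def s_def y_def
      by (auto simp: field_simps)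
    have "mk m (m * (a - m) - c) 1 (a - m) ** mk (l * ((a - m) / \<mu>)) (l * (((a - m) * s + (c - m * (a - m)) * y) / \<mu>))
                (l * (-1 / \<mu>)) (l * ((m * y - s) / \<mu>)) = mk 1 s 0 y"
      using mu c0 unfolding mk_mult l_def s_def y_def
      by (simp add: field_simps)
    with mul[OF M N] show ?thesis by (simp add: s_def)
  qed
  have y1: "1 - y \<noteq> 0" using mu by (simp add: y_def)
  define m2 where "m2 = x * y / (1 - y)"
  have "mk 1 x 0 1 ** mk 1 (a * (1 - \<mu>) - m2 * (1 - y)) 0 y = mk 1 (a * (1 - \<mu>) - 0 * (1 - y)) 0 y"
    using y1 unfolding mk_mult m2_def by (simp add: field_simps)
  then show ?thesis using rc[OF P[of m2] P[of 0]] by simp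
qed

lemma U_in: "mk 1 x 0 1 \<in> S"
proof (cases "\<exists>\<mu>::'a. \<mu> \<noteq> 0 \<and> \<mu> * \<mu> \<noteq> 1")
  case True then show ?thesis using U_caseA by blast
next
  case False
  then have a0: "a \<noteq> 0" and two: "(2::'a) \<noteq> 0" using hB by auto
  show ?thesis
  proof (cases "x = 0")
    case True then show ?thesis using sc[of 1] by simp
  next
    case x0: False
    define r where "r = - 2 * a / x"
    have r0: "r \<noteq> 0" using a0 two x0 by (simp add: r_def)
    have M: "mk 0 (- c / r) r a \<in> S" by (rule cc) (use r0 in auto)
    have N: "mk ((-1) * 0) ((-1) * (c / r)) ((-1) * (- r)) ((-1) * a) \<in> S"
      by (rule scc) (use r0 in auto)
    have "mk 0 (- c / r) r a ** mk 1 x 0 1 = mk ((-1) * 0) ((-1) * (c / r)) ((-1) * (- r)) ((-1) * a)"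
      using x0 unfolding mk_mult r_def by (simp add: field_simps)
    then show ?thesis using lc[OF M N] by simp
  qed
qed

end

definition sw :: "('a::field)^2^2 \<Rightarrow> 'a^2^2" where
  "sw A = mk (A$2$2) (A$2$1) (A$1$2) (A$1$1)"

lemma sw_mk[simp]: "sw (mk p q r s) = mk s r q p" by (simp add: sw_def)

lemma sw_sw[simp]: "sw (sw A) = A"
  by (subst (2) mk_eta) (simp add: sw_def)

lemma sw_mult: "sw (A ** B) = sw A ** sw B"
proof -
  obtain p q r s where A: "A = mk p q r s" by (meson mk_eta)
  obtain p2 q2 r2 s2 where B: "B = mk p2 q2 r2 s2" by (meson mk_eta)
  show ?thesis unfolding A B mk_mult sw_mk by (simp add: algebra_simps)
qed

lemma genS_sw:
  assumes G: "genS S a c" shows "genS {A. sw A \<in> S} a c"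
proof -
  interpret genS S a c by (rule G)
  show ?thesis
  proof (unfold_locales)
    show "c \<noteq> 0" by (rule c0)
    show "\<And>r. r * r - a * r + c \<noteq> 0" by (rule noroot)
    show "\<And>d. d \<noteq> 0 \<Longrightarrow> \<exists>z. d = z * z \<or> d = c * (z * z)" by (rule sqc)
    show "(\<forall>\<mu>::'a. \<mu> \<noteq> 0 \<longrightarrow> \<mu> * \<mu> = 1) \<Longrightarrow> a \<noteq> 0 \<and> (2::'a) \<noteq> 0" by (rule hB)
    show "\<And>A B. A \<in> {A. sw A \<in> S} \<Longrightarrow> B \<in> {A. sw A \<in> S} \<Longrightarrow> A ** B \<in> {A. sw A \<in> S}"
      by (simp add: sw_mult mul)
    show "\<And>M N X. M \<in> {A. sw A \<in> S} \<Longrightarrow> N \<in> {A. sw A \<in> S} \<Longrightarrow> M ** X = N \<Longrightarrow> X \<in> {A. sw A \<in> S}"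
    proof -
      fix M N X assume "M \<in> {A. sw A \<in> S}" "N \<in> {A. sw A \<in> S}" "M ** X = N"
      then have "sw M \<in> S" "sw N \<in> S" "sw M ** sw X = sw N" by (auto simp: sw_mult[symmetric])
      then show "X \<in> {A. sw A \<in> S}" using lc by blast
    qed
    show "\<And>A B X. B \<in> {A. sw A \<in> S} \<Longrightarrow> A \<in> {A. sw A \<in> S} \<Longrightarrow> X ** B = A \<Longrightarrow> X \<in> {A. sw A \<in> S}"
    proof -
      fix A B X assume "B \<in> {A. sw A \<in> S}" "A \<in> {A. sw A \<in> S}" "X ** B = A"
      then have "sw B \<in> S" "sw A \<in> S" "sw X ** sw B = sw A" by (auto simp: sw_mult[symmetric])
      then show "X \<in> {A. sw A \<in> S}" using rc by blast
    qed
    show "\<And>l. l \<noteq> 0 \<Longrightarrow> mk l 0 0 l \<in> {A. sw A \<in> S}" by (simp add: sc)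
    show "\<And>p q r s. p + s = a \<Longrightarrow> p * s - q * r = c \<Longrightarrow> mk p q r s \<in> {A. sw A \<in> S}"
      by (simp add: cc add.commute mult.commute)
  qed
qed

context genS begin

lemma L_in: "mk 1 0 x 1 \<in> S"
  using genS.U_in[OF genS_sw[OF genS_axioms], of x] by simp

lemma SL_r: "p * s - q * r = 1 \<Longrightarrow> r \<noteq> 0 \<Longrightarrow> mk p q r s \<in> S"
proof -
  assume d: "p * s - q * r = 1" and r: "r \<noteq> 0"
  have "mk 1 ((p - 1) / r) 0 1 ** mk 1 0 r 1 ** mk 1 ((s - 1) / r) 0 1 = mk p q r s"
    using r d unfolding mk_mult by (simp add: field_simps)
  note eq = this
  from mul[OF mul[OF U_in[of "(p - 1) / r"] L_in[of r]] U_in[of "(s - 1) / r"]] show ?thesis unfolding eq .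
qed

lemma SL: "p * s - q * r = 1 \<Longrightarrow> mk p q r s \<in> S"
proof (cases "r = 0")
  case False
  assume d: "p * s - q * r = 1" show ?thesis by (rule SL_r[OF d False])
next
  case True
  assume d: "p * s - q * r = 1"
  then have p: "p \<noteq> 0" using True by auto
  have "mk p q p (q + s) \<in> S" by (rule SL_r) (use d True p in \<open>auto simp: algebra_simps\<close>)
  moreover have "mk 1 0 1 1 ** mk p q r s = mk p q p (q + s)" using True by (simp add: mk_mult)
  ultimately show ?thesis using lc[OF L_in] by blast
qed

lemma sq_in: "z \<noteq> 0 \<Longrightarrow> det A = z * z \<Longrightarrow> A \<in> S"
proof -
  assume z: "z \<noteq> 0" and d: "det A = z * z"
  obtain p q r s where A: "A = mk p q r s" by (meson mk_eta)
  have "mk (p / z) (q / z) (r / z) (s / z) \<in> S"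
    by (rule SL) (use z d A in \<open>auto simp: det_mk field_simps\<close>)
  moreover have "mk z 0 0 z ** mk (p / z) (q / z) (r / z) (s / z) = A"
    using z A by (simp add: mk_mult)
  ultimately show ?thesis using mul[OF sc[OF z], of "mk (p / z) (q / z) (r / z) (s / z)"] by simp
qed

lemma all_in: "det A \<noteq> 0 \<Longrightarrow> A \<in> S"
proof -
  assume d: "det A \<noteq> 0"
  obtain z where z: "det A = z * z \<or> det A = c * (z * z)" using sqc[OF d] by blast
  then have z0: "z \<noteq> 0" using d by auto
  show ?thesis
  proof (cases "det A = z * z")
    case True then show ?thesis using sq_in z0 by blast
  next
    case False
    then have dc: "det A = c * (z * z)" using z by auto
    define B where "B = mk (a / c) 1 (- 1 / c) 0 ** A"
    have "det B = z * z" unfolding B_def det_mul det_mk dc using c0 by (simp add: field_simps)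
    then have B: "B \<in> S" using sq_in z0 by blast
    have M: "mk 0 (- c) 1 a \<in> S" by (rule cc) auto
    have I: "mk 0 (- c) 1 a ** mk (a / c) 1 (- 1 / c) 0 = mat 1"
      using c0 by (simp add: mk_mult mat1_mk)
    have "mk 0 (- c) 1 a ** B = A" unfolding B_def matrix_mul_assoc I matrix_mul_lid ..
    note eq = this
    from mul[OF M B] show ?thesis unfolding eq .
  qed
qed

end



lemma exists_c:
  "\<exists>c::'a::{field,finite}. c \<noteq> 0 \<and> (\<forall>d. d \<noteq> 0 \<longrightarrow> (\<exists>z. d = z * z \<or> d = c * (z * z)))"
proof (cases "\<forall>d::'a. d \<noteq> 0 \<longrightarrow> (\<exists>z. d = z * z)")
  case True then show ?thesis by (intro exI[of _ 1]) auto
next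
  case False
  then obtain c :: 'a where c0: "c \<noteq> 0" and cn: "\<And>z. c \<noteq> z * z" by auto
  define Sq where "Sq = (\<lambda>z::'a. z * z) ` (UNIV - {0})"
  define F where "F = (UNIV - {0::'a})"
  define cSq where "cSq = (\<lambda>s. c * s) ` Sq"
  have SqF: "Sq \<subseteq> F" by (auto simp: Sq_def F_def)
  have cSqF: "cSq \<subseteq> F" using c0 by (auto simp: cSq_def Sq_def F_def)
  have disj: "Sq \<inter> cSq = {}"
  proof (rule ccontr)
    assume "Sq \<inter> cSq \<noteq> {}"
    then obtain z w :: 'a where "z \<noteq> 0" "w \<noteq> 0" "z * z = c * (w * w)"
      by (auto simp: Sq_def cSq_def)
    then have "c = (z / w) * (z / w)" by (simp add: field_simps)
    then show False using cn by blast
  qed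
  have ccard: "card cSq = card Sq"
    unfolding cSq_def by (rule card_image) (use c0 in \<open>auto simp: inj_on_def\<close>)
  have Fsub: "F \<subseteq> (\<Union>s\<in>Sq. {z. z \<noteq> 0 \<and> z * z = s})" by (auto simp: F_def Sq_def)
  have fib: "card {z::'a. z \<noteq> 0 \<and> z * z = s} \<le> 2" if sS: "s \<in> Sq" for s
  proof -
    obtain w where w: "s = w * w" using sS unfolding Sq_def by blast
    have "{z::'a. z \<noteq> 0 \<and> z * z = s} \<subseteq> {w, -w}"
    proof
      fix z assume "z \<in> {z::'a. z \<noteq> 0 \<and> z * z = s}"
      then have "(z - w) * (z + w) = 0" using w by (simp add: algebra_simps)
      then show "z \<in> {w, -w}" by (auto simp: add_eq_0_iff2)
    qed
    then have "card {z::'a. z \<noteq> 0 \<and> z * z = s} \<le> card {w, -w}" by (intro card_mono) simp_all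
    also have "\<dots> \<le> 2" by (simp add: card_insert_le_m1)
    finally show ?thesis .
  qed
  have "card F \<le> card (\<Union>s\<in>Sq. {z::'a. z \<noteq> 0 \<and> z * z = s})" by (rule card_mono[OF _ Fsub]) simp
  also have "\<dots> \<le> (\<Sum>s\<in>Sq. card {z::'a. z \<noteq> 0 \<and> z * z = s})" by (rule card_UN_le) simp
  also have "\<dots> \<le> (\<Sum>s\<in>Sq. 2)" by (rule sum_mono) (rule fib)
  also have "\<dots> = card Sq + card cSq" using ccard by simp
  also have "\<dots> = card (Sq \<union> cSq)" by (rule card_Un_disjoint[symmetric]) (use disj in auto)
  finally have "card F \<le> card (Sq \<union> cSq)" .
  then have eq: "Sq \<union> cSq = F" using SqF cSqF by (intro card_seteq) auto
  have "\<forall>d. d \<noteq> 0 \<longrightarrow> (\<exists>z. d = z * z \<or> d = c * (z * z))"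
  proof (intro allI impI)
    fix d :: 'a assume "d \<noteq> 0"
    then have "d \<in> Sq \<union> cSq" using eq by (simp add: F_def)
    then show "\<exists>z. d = z * z \<or> d = c * (z * z)" by (auto simp: Sq_def cSq_def)
  qed
  then show ?thesis using c0 by blast
qed

lemma exists_a:
  fixes c :: "'a::{field,finite}"
  assumes c0: "c \<noteq> 0"
  shows "\<exists>a. \<forall>r. r * r - a * r + c \<noteq> 0"
proof -
  define g where "g = (\<lambda>r::'a. r + c / r)"
  have "card (g ` (UNIV - {0})) \<le> card (UNIV - {0::'a})" by (rule card_image_le) simp
  also have "\<dots> < card (UNIV :: 'a set)" by (simp add: card_Diff_singleton)
  finally have "g ` (UNIV - {0}) \<noteq> UNIV" by auto
  then obtain a where a: "a \<notin> g ` (UNIV - {0})" by auto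
  show ?thesis
  proof (intro exI[of _ a] allI notI)
    fix r assume h: "r * r - a * r + c = 0"
    show False
    proof (cases "r = 0")
      case True then show False using h c0 by simp
    next
      case False
      then have "a = g r" using h unfolding g_def by (simp add: field_simps)
      then show False using a False by auto
    qed
  qed
qed

lemma caseB:
  fixes a c :: "'a::{field,finite}"
  assumes card: "CARD('a) > 2" and c0: "c \<noteq> 0"
    and noroot: "\<And>r. r * r - a * r + c \<noteq> 0"
    and sqc: "\<And>d. d \<noteq> 0 \<Longrightarrow> \<exists>z. d = z * z \<or> d = c * (z * z)"
    and B: "\<forall>\<mu>::'a. \<mu> \<noteq> 0 \<longrightarrow> \<mu> * \<mu> = 1"
  shows "a \<noteq> 0 \<and> (2::'a) \<noteq> 0"
proof
  obtain \<mu> :: 'a where m: "\<mu> \<noteq> 0" "\<mu> \<noteq> 1"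
  proof -
    have "\<not> (UNIV :: 'a set) \<subseteq> {0, 1}"
    proof
      assume "(UNIV :: 'a set) \<subseteq> {0, 1}"
      then have "CARD('a) \<le> card {0::'a, 1}" by (rule card_mono[rotated]) simp
      also have "\<dots> \<le> 2" by (simp add: card_insert_le_m1)
      finally show False using card by simp
    qed
    then show ?thesis using that by blast
  qed
  have "(\<mu> - 1) * (\<mu> + 1) = 0" using B m by (simp add: algebra_simps)
  then have "\<mu> = -1" using m by (simp add: add_eq_0_iff2)
  then show two: "(2::'a) \<noteq> 0" using m by auto
  show "a \<noteq> 0"
  proof
    assume a0: "a = 0"
    have "c * c = 1" using B c0 by auto
    then have "(c - 1) * (c + 1) = 0" by (simp add: algebra_simps)
    moreover have "c \<noteq> -1" using noroot[of 1] a0 by auto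
    ultimately have c1: "c = 1" by (auto simp: add_eq_0_iff2)
    obtain z where "-1 = z * z \<or> -1 = c * (z * z)" using sqc[of "-1"] by auto
    then have "z * z = -1" using c1 by auto
    then show False using noroot[of z] a0 c1 by simp
  qed
qed




definition inv2 :: "('a::field)^2^2 \<Rightarrow> 'a^2^2" where
  "inv2 A = mk (A$2$2 / det A) (- A$1$2 / det A) (- A$2$1 / det A) (A$1$1 / det A)"

lemma inv2_mk: "inv2 (mk p q r s) = mk (s / (p * s - q * r)) (- q / (p * s - q * r)) (- r / (p * s - q * r)) (p / (p * s - q * r))"
  by (simp add: inv2_def det_mk)

lemma inv_mk_aux:
  assumes "d \<noteq> 0" "p * s - q * r = d"
  shows "mk p q r s ** mk (s / d) (- q / d) (- r / d) (p / d) = mat 1"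
    "mk (s / d) (- q / d) (- r / d) (p / d) ** mk p q r s = mat 1"
  using assms by (simp_all add: mk_mult mat1_mk field_simps)

lemma inv2_right: "det A \<noteq> 0 \<Longrightarrow> A ** inv2 A = mat 1"
proof -
  assume d: "det A \<noteq> 0"
  obtain p q r s where A: "A = mk p q r s" by (meson mk_eta)
  show ?thesis using d inv_mk_aux(1)[of "p * s - q * r" p s q r] unfolding A inv2_mk det_mk by simp
qed

lemma inv2_left: "det A \<noteq> 0 \<Longrightarrow> inv2 A ** A = mat 1"
proof -
  assume d: "det A \<noteq> 0"
  obtain p q r s where A: "A = mk p q r s" by (meson mk_eta)
  show ?thesis using d inv_mk_aux(2)[of "p * s - q * r" p s q r] unfolding A inv2_mk det_mk by simp
qed

lemma inv2_det: "det A \<noteq> 0 \<Longrightarrow> det (inv2 A) \<noteq> 0"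
  using inv2_right[of A] det_mul[of A "inv2 A"] by (auto simp: det_I)

lemma mulv_ne0: "det (A::'a::field^2^2) \<noteq> 0 \<Longrightarrow> v \<noteq> 0 \<Longrightarrow> A *v v \<noteq> 0"
proof
  assume d: "det A \<noteq> 0" and v: "v \<noteq> 0" and h: "A *v v = 0"
  have "v = inv2 A *v (A *v v)" by (simp add: matrix_vector_mul_assoc inv2_left[OF d])
  then show False using h v by simp
qed

definition Cm :: "'a::field \<Rightarrow> 'a \<Rightarrow> 'a^2^2 \<Rightarrow> bool" where
  "Cm a c A \<longleftrightarrow> A$1$1 + A$2$2 = a \<and> det A = c"

definition Tset :: "'a::field \<Rightarrow> 'a \<Rightarrow> ('a^2^2) set" where
  "Tset a c = {A. (\<exists>l. l \<noteq> 0 \<and> A = mk l 0 0 l) \<or> Cm a c A}"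

definition e1 :: "'a::field^2" where "e1 = v2 1 0"

definition Tm :: "'a::field \<Rightarrow> 'a \<Rightarrow> 'a^2 \<Rightarrow> 'a^2^2" where
  "Tm a c v = (if v$2 = 0 then mk (v$1) 0 0 (v$1)
     else mk (v$1) ((v$1 * (a - v$1) - c) / v$2) (v$2) (a - v$1))"

lemma Cm_mk: "Cm a c (mk p q r s) \<longleftrightarrow> p + s = a \<and> p * s - q * r = c"
  by (simp add: Cm_def det_mk)

lemma v2_ne0: "v2 x y \<noteq> 0 \<longleftrightarrow> x \<noteq> 0 \<or> y \<noteq> 0"
  by (simp add: v2_zero)

lemma lin2: "d * x + e * y = 0 \<Longrightarrow> d * w1 + e * w2 = 0 \<Longrightarrow> x * w2 - y * w1 \<noteq> (0::'a::field) \<Longrightarrow> d = 0 \<and> e = 0"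
proof -
  assume h1: "d * x + e * y = 0" and h2: "d * w1 + e * w2 = 0" and dl: "x * w2 - y * w1 \<noteq> 0"
  have "d * (x * w2 - y * w1) = w2 * (d * x + e * y) - y * (d * w1 + e * w2)" by (simp add: algebra_simps)
  then have "d = 0" using h1 h2 dl by simp
  moreover have "e * (x * w2 - y * w1) = x * (d * w1 + e * w2) - w1 * (d * x + e * y)" by (simp add: algebra_simps)
  then have "e = 0" using h1 h2 dl by simp
  ultimately show ?thesis by simp
qed

lemma parallel: "x \<noteq> 0 \<or> y \<noteq> 0 \<Longrightarrow> x * w2 - y * w1 = (0::'a::field) \<Longrightarrow> \<exists>l. w1 = l * x \<and> w2 = l * y"
proof -
  assume xy: "x \<noteq> 0 \<or> y \<noteq> 0" and d: "x * w2 - y * w1 = 0"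
  show ?thesis
  proof (cases "x = 0")
    case False
    show ?thesis by (rule exI[of _ "w1 / x"]) (use False d in \<open>auto simp: field_simps\<close>)
  next
    case True
    then have y: "y \<noteq> 0" using xy by simp
    show ?thesis by (rule exI[of _ "w2 / y"]) (use True y d in \<open>auto simp: field_simps\<close>)
  qed
qed

locale field_par =
  fixes a c :: "'a::field"
  assumes c0: "c \<noteq> 0"
    and noroot: "\<And>r. r * r - a * r + c \<noteq> 0"
begin

lemma noeig_coord:
  assumes "p + s = a" "p * s - q * r = c" "p * x + q * y = l * x" "r * x + s * y = l * y"
  shows "x = 0 \<and> y = 0"
proof -
  have D: "l * l - a * l + c \<noteq> 0" by (rule noroot)
  have "x * (l * l - a * l + c) = (s - l) * (p * x + q * y - l * x) - q * (r * x + s * y - l * y)"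
    by (simp add: algebra_simps flip: assms(1,2))
  then have "x = 0" using assms(3,4) D by simp
  moreover have "y * (l * l - a * l + c) = (p - l) * (r * x + s * y - l * y) - r * (p * x + q * y - l * x)"
    by (simp add: algebra_simps flip: assms(1,2))
  then have "y = 0" using assms(3,4) D by simp
  ultimately show ?thesis by simp
qed

lemma Tset_det: "t \<in> Tset a c \<Longrightarrow> det t \<noteq> 0"
  using c0 by (auto simp: Tset_def Cm_def det_mk)

lemma sharp_unique:
  assumes u: "u \<noteq> 0" and t1: "t1 \<in> Tset a c" and t2: "t2 \<in> Tset a c" and eq: "t1 *v u = t2 *v u"
  shows "t1 = t2"
proof -
  obtain x y where U: "u = v2 x y" by (meson v2_eta)
  have xy: "x \<noteq> 0 \<or> y \<noteq> 0" using u U v2_ne0 by auto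
  have noeig: "\<And>p q r s l. Cm a c (mk p q r s) \<Longrightarrow> mk p q r s *v u = mk l 0 0 l *v u \<Longrightarrow> False"
  proof -
    fix p q r s l assume "Cm a c (mk p q r s)" "mk p q r s *v u = mk l 0 0 l *v u"
    then show False using noeig_coord[of p s q r x y l] xy unfolding U mk_mulv Cm_mk by auto
  qed
  show ?thesis
  proof (cases "\<exists>l. l \<noteq> 0 \<and> t1 = mk l 0 0 l")
    case True
    then obtain l1 where l1: "t1 = mk l1 0 0 l1" by auto
    show ?thesis
    proof (cases "\<exists>l. l \<noteq> 0 \<and> t2 = mk l 0 0 l")
      case True
      then obtain l2 where l2: "t2 = mk l2 0 0 l2" by auto
      show ?thesis using eq xy unfolding l1 l2 U mk_mulv by auto
    next
      case False
      then have "Cm a c t2" using t2 by (auto simp: Tset_def)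
      moreover obtain p q r s where P: "t2 = mk p q r s" by (meson mk_eta)
      ultimately have "Cm a c (mk p q r s)" "mk p q r s *v u = mk l1 0 0 l1 *v u" using eq l1 by auto
      then show ?thesis by (rule noeig[THEN FalseE])
    qed
  next
    case False
    then have C1: "Cm a c t1" using t1 by (auto simp: Tset_def)
    obtain p q r s where P1: "t1 = mk p q r s" by (meson mk_eta)
    show ?thesis
    proof (cases "\<exists>l. l \<noteq> 0 \<and> t2 = mk l 0 0 l")
      case True
      then obtain l2 where l2: "t2 = mk l2 0 0 l2" by auto
      have "Cm a c (mk p q r s)" "mk p q r s *v u = mk l2 0 0 l2 *v u" using C1 eq l2 P1 by auto
      then show ?thesis by (rule noeig[THEN FalseE])
    next
      case False
      then have C2: "Cm a c t2" using t2 by (auto simp: Tset_def)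
      obtain p2 q2 r2 s2 where P2: "t2 = mk p2 q2 r2 s2" by (meson mk_eta)
      define w1 where "w1 = p * x + q * y"
      define w2 where "w2 = r * x + s * y"
      have e1: "p2 * x + q2 * y = w1" "r2 * x + s2 * y = w2"
        using eq unfolding P1 P2 U mk_mulv w1_def w2_def by auto
      have c1: "p + s = a" "p * s - q * r = c" using C1 P1 by (auto simp: Cm_mk)
      have c2: "p2 + s2 = a" "p2 * s2 - q2 * r2 = c" using C2 P2 by (auto simp: Cm_mk)
      have dl: "x * w2 - y * w1 \<noteq> 0"
      proof
        assume "x * w2 - y * w1 = 0"
        then obtain l where "w1 = l * x" "w2 = l * y" using parallel[OF xy] by blast
        then show False using noeig_coord[OF c1, of x y l] xy unfolding w1_def w2_def by auto
      qed
      have ac1: "a = p + s" "c = p * s - q * r" using c1 by auto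
      have ac2: "a = p2 + s2" "c = p2 * s2 - q2 * r2" using c2 by auto
      have ch1: "p * w1 + q * w2 = a * w1 - c * x" "r * w1 + s * w2 = a * w2 - c * y"
        unfolding w1_def w2_def ac1 by (simp_all add: algebra_simps)
      have ch2: "p2 * w1 + q2 * w2 = a * w1 - c * x" "r2 * w1 + s2 * w2 = a * w2 - c * y"
        unfolding e1[symmetric] ac2 by (simp_all add: algebra_simps)
      have "(p - p2) * x + (q - q2) * y = 0"
      proof -
        have "p * x + q * y = p2 * x + q2 * y" using e1(1) w1_def by simp
        then show ?thesis by (simp add: algebra_simps)
      qed
      moreover have "(p - p2) * w1 + (q - q2) * w2 = 0"
      proof -
        have "p * w1 + q * w2 = p2 * w1 + q2 * w2" using ch1(1) ch2(1) by simp
        then show ?thesis by (simp add: algebra_simps)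
      qed
      ultimately have "p - p2 = 0 \<and> q - q2 = 0" by (rule lin2[OF _ _ dl])
      then have A: "p = p2 \<and> q = q2" by simp
      have "(r - r2) * x + (s - s2) * y = 0"
      proof -
        have "r * x + s * y = r2 * x + s2 * y" using e1(2) w2_def by simp
        then show ?thesis by (simp add: algebra_simps)
      qed
      moreover have "(r - r2) * w1 + (s - s2) * w2 = 0"
      proof -
        have "r * w1 + s * w2 = r2 * w1 + s2 * w2" using ch1(2) ch2(2) by simp
        then show ?thesis by (simp add: algebra_simps)
      qed
      ultimately have "r - r2 = 0 \<and> s - s2 = 0" by (rule lin2[OF _ _ dl])
      then have B: "r = r2 \<and> s = s2" by simp
      show ?thesis using A B P1 P2 by simp
    qed
  qed
qed

end



context field_par begin

lemma sharp_exist: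
  assumes u: "u \<noteq> 0" and w: "w \<noteq> 0"
  shows "\<exists>t\<in>Tset a c. t *v u = w"
proof -
  obtain x y where U: "u = v2 x y" by (meson v2_eta)
  obtain w1 w2 where W: "w = v2 w1 w2" by (meson v2_eta)
  have xy: "x \<noteq> 0 \<or> y \<noteq> 0" using u U v2_ne0 by auto
  have ww: "w1 \<noteq> 0 \<or> w2 \<noteq> 0" using w W v2_ne0 by auto
  define d where "d = x * w2 - y * w1"
  show ?thesis
  proof (cases "d = 0")
    case True
    then obtain l where l: "w1 = l * x" "w2 = l * y" using parallel[OF xy] by (auto simp: d_def)
    then have "l \<noteq> 0" using ww by auto
    then have "mk l 0 0 l \<in> Tset a c" by (auto simp: Tset_def)
    moreover have "mk l 0 0 l *v u = w" unfolding U W mk_mulv using l by simp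
    ultimately show ?thesis by blast
  next
    case False
    define t where "t = mk ((w1 * w2 - (a * w1 - c * x) * y) / d) (((a * w1 - c * x) * x - w1 * w1) / d)
       ((w2 * w2 - (a * w2 - c * y) * y) / d) (((a * w2 - c * y) * x - w2 * w1) / d)"
    have "Cm a c t" unfolding t_def Cm_mk using False
      by (simp add: field_simps) (simp add: d_def algebra_simps)
    then have "t \<in> Tset a c" by (simp add: Tset_def)
    moreover have "t *v u = w" unfolding t_def U W mk_mulv using False
      by (simp add: field_simps) (simp add: d_def algebra_simps)
    ultimately show ?thesis by blast
  qed
qed

lemma e1_ne0: "e1 \<noteq> 0" by (simp add: e1_def v2_ne0)

lemma Tm_T: "v \<noteq> 0 \<Longrightarrow> Tm a c v \<in> Tset a c"
proof -
  assume v: "v \<noteq> 0"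
  obtain x y where V: "v = v2 x y" by (meson v2_eta)
  show ?thesis
  proof (cases "y = 0")
    case True
    then have "x \<noteq> 0" using v V v2_ne0 by auto
    then show ?thesis using True unfolding V Tm_def Tset_def by auto
  next
    case False
    then show ?thesis unfolding V Tm_def Tset_def by (auto simp: Cm_mk field_simps)
  qed
qed

lemma Tm_e1: "Tm a c v *v e1 = v"
proof -
  obtain x y where V: "v = v2 x y" by (meson v2_eta)
  show ?thesis unfolding V Tm_def e1_def by (simp add: mk_mulv)
qed

lemma Tm_uniq: "t \<in> Tset a c \<Longrightarrow> Tm a c (t *v e1) = t"
proof -
  assume t: "t \<in> Tset a c"
  have ne: "t *v e1 \<noteq> 0" by (rule mulv_ne0[OF Tset_det[OF t] e1_ne0])
  show ?thesis by (rule sharp_unique[OF e1_ne0 Tm_T[OF ne] t]) (simp add: Tm_e1)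
qed

lemma Tm_e1_I: "Tm a c e1 = mat 1"
  by (simp add: Tm_def e1_def mat1_mk)

lemma conj_T:
  assumes t: "t \<in> Tset a c" and s: "s \<in> Tset a c"
  shows "inv2 s ** t ** s \<in> Tset a c"
proof -
  have ds: "det s \<noteq> 0" by (rule Tset_det[OF s])
  obtain p q r z where S: "s = mk p q r z" by (meson mk_eta)
  define d where "d = p * z - q * r"
  have d: "d \<noteq> 0" using ds S by (simp add: det_mk d_def)
  have iS: "inv2 s = mk (z / d) (- q / d) (- r / d) (p / d)" unfolding S inv2_mk d_def ..
  show ?thesis
  proof (cases "\<exists>l. l \<noteq> 0 \<and> t = mk l 0 0 l")
    case True
    then obtain l where l: "l \<noteq> 0" "t = mk l 0 0 l" by auto
    have com: "t ** s = s ** t" unfolding S l mk_mult by (simp add: algebra_simps)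
    have "inv2 s ** t ** s = inv2 s ** (t ** s)" by (rule matrix_mul_assoc[symmetric])
    also have "\<dots> = inv2 s ** (s ** t)" by (simp only: com)
    also have "\<dots> = (inv2 s ** s) ** t" by (rule matrix_mul_assoc)
    also have "\<dots> = t" by (simp add: inv2_left[OF ds])
    finally have "inv2 s ** t ** s = t" .
    then show ?thesis using t by simp
  next
    case False
    then have C: "Cm a c t" using t by (auto simp: Tset_def)
    obtain p2 q2 r2 s2 where T: "t = mk p2 q2 r2 s2" by (meson mk_eta)
    have det: "det (inv2 s ** t ** s) = det t"
    proof -
      have "det (inv2 s ** t ** s) = det t * (det (inv2 s) * det s)" by (simp add: det_mul)
      also have "det (inv2 s) * det s = 1" using inv2_left[OF ds] det_mul[of "inv2 s" s] by (simp add: det_I)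
      finally show ?thesis by simp
    qed
    have tr: "(inv2 s ** t ** s) $ 1 $ 1 + (inv2 s ** t ** s) $ 2 $ 2 = p2 + s2"
      unfolding iS unfolding T S mk_mult mk_nth using d by (simp add: field_simps) (simp add: d_def algebra_simps)
    have "Cm a c (inv2 s ** t ** s)" using C det tr T unfolding Cm_def by simp
    then show ?thesis by (simp add: Tset_def)
  qed
qed

end



lemma GL2_simps[simp]: "carrier GL2 = {A. det A \<noteq> 0}" "mult GL2 A B = A ** B" "one GL2 = mat 1"
  by (simp_all add: GL2_def)

lemma group_GL2: "group (GL2 :: ('a::field^2^2) monoid)"
proof (rule groupI)
  show "\<And>x y. x \<in> carrier (GL2::('a^2^2) monoid) \<Longrightarrow> y \<in> carrier GL2 \<Longrightarrow> x \<otimes>\<^bsub>GL2\<^esub> y \<in> carrier GL2"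
    by (simp add: det_mul)
  show "\<one>\<^bsub>GL2\<^esub> \<in> carrier (GL2::('a^2^2) monoid)" by (simp add: det_I)
  show "\<And>x y z. x \<in> carrier (GL2::('a^2^2) monoid) \<Longrightarrow> y \<in> carrier GL2 \<Longrightarrow> z \<in> carrier GL2 \<Longrightarrow>
     x \<otimes>\<^bsub>GL2\<^esub> y \<otimes>\<^bsub>GL2\<^esub> z = x \<otimes>\<^bsub>GL2\<^esub> (y \<otimes>\<^bsub>GL2\<^esub> z)"
    by (simp add: matrix_mul_assoc)
  show "\<And>x. x \<in> carrier (GL2::('a^2^2) monoid) \<Longrightarrow> \<one>\<^bsub>GL2\<^esub> \<otimes>\<^bsub>GL2\<^esub> x = x"
    by simp
  show "\<And>x. x \<in> carrier (GL2::('a^2^2) monoid) \<Longrightarrow> \<exists>y\<in>carrier GL2. y \<otimes>\<^bsub>GL2\<^esub> x = \<one>\<^bsub>GL2\<^esub>"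
    using inv2_left inv2_det by fastforce
qed

lemma inv_GL2: "det A \<noteq> 0 \<Longrightarrow> inv\<^bsub>GL2\<^esub> A = inv2 A"
  by (rule group.inv_equality[OF group_GL2]) (simp_all add: inv2_left inv2_det)

locale loop_setup = field_par a c for a c :: "'a::field" +
  fixes enc :: "'a^2 \<Rightarrow> nat"
  assumes inj_enc: "inj enc"
begin

definition "LL = enc ` {v. v \<noteq> 0}"
definition "dec = inv_into UNIV enc"
definition "mm x y = enc (Tm a c (dec y) *v dec x)"
definition "ph A = restrict (\<lambda>x. enc (A *v dec x)) LL"

lemma dec_enc[simp]: "dec (enc v) = v"
  by (simp add: dec_def inj_enc)

lemma LL_dec: "x \<in> LL \<Longrightarrow> dec x \<noteq> 0 \<and> enc (dec x) = x"
  by (auto simp: LL_def)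

lemma enc_LL: "v \<noteq> 0 \<Longrightarrow> enc v \<in> LL"
  by (simp add: LL_def)

lemma ph_in: "x \<in> LL \<Longrightarrow> ph A x = enc (A *v dec x)"
  by (simp add: ph_def)

lemma enc_mul_LL: "det A \<noteq> 0 \<Longrightarrow> x \<in> LL \<Longrightarrow> enc (A *v dec x) \<in> LL"
  by (intro enc_LL mulv_ne0) (auto simp: LL_dec)

lemma ph_mem: "det A \<noteq> 0 \<Longrightarrow> x \<in> LL \<Longrightarrow> ph A x \<in> LL"
  by (simp add: ph_in enc_mul_LL)

lemma ph_comp: "det B \<noteq> 0 \<Longrightarrow> ph (A ** B) = compose LL (ph A) (ph B)"
  unfolding compose_def
  by (rule ext) (auto simp: ph_def enc_mul_LL matrix_vector_mul_assoc)

lemma ph_one: "ph (mat 1) = (\<lambda>x\<in>LL. x)"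
  by (rule ext) (simp add: ph_def LL_dec)

lemma ph_Bij: "det A \<noteq> 0 \<Longrightarrow> ph A \<in> Bij LL"
proof -
  assume d: "det A \<noteq> 0"
  have i1: "compose LL (ph A) (ph (inv2 A)) = (\<lambda>x\<in>LL. x)"
    using ph_comp[OF inv2_det[OF d], of A] by (simp add: inv2_right[OF d] ph_one)
  have i2: "compose LL (ph (inv2 A)) (ph A) = (\<lambda>x\<in>LL. x)"
    using ph_comp[OF d, of "inv2 A"] by (simp add: inv2_left[OF d] ph_one)
  have "bij_betw (ph A) LL LL"
  proof (rule bij_betw_byWitness[where f' = "ph (inv2 A)"])
    show "\<forall>x\<in>LL. ph (inv2 A) (ph A x) = x"
    proof
      fix x assume "x \<in> LL" then show "ph (inv2 A) (ph A x) = x" using fun_cong[OF i2, of x] by (simp add: compose_def)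
    qed
    show "\<forall>x\<in>LL. ph A (ph (inv2 A) x) = x"
    proof
      fix x assume "x \<in> LL" then show "ph A (ph (inv2 A) x) = x" using fun_cong[OF i1, of x] by (simp add: compose_def)
    qed
    show "ph A ` LL \<subseteq> LL" using ph_mem[OF d] by auto
    show "ph (inv2 A) ` LL \<subseteq> LL" using ph_mem[OF inv2_det[OF d]] by auto
  qed
  then show ?thesis by (simp add: Bij_def ph_def)
qed

lemma ph_hom: "ph \<in> hom GL2 (BijGroup LL)"
  unfolding hom_def
  by (auto simp: ph_Bij BijGroup_def ph_comp det_mul)

lemma group_hom_ph: "group_hom GL2 (BijGroup LL) ph"
  by (simp add: group_hom_def group_hom_axioms_def group_GL2 group_BijGroup ph_hom)

lemma ph_inj: "inj_on ph (carrier GL2)"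
proof (rule inj_onI)
  fix A B :: "'a^2^2" assume "ph A = ph B"
  then have h: "\<And>v. v \<noteq> 0 \<Longrightarrow> A *v v = B *v v"
    by (metis (no_types, lifting) dec_enc enc_LL inj_enc inj_eq ph_in)
  obtain p q r s where A: "A = mk p q r s" by (meson mk_eta)
  obtain p2 q2 r2 s2 where B: "B = mk p2 q2 r2 s2" by (meson mk_eta)
  show "A = B"
    using h[of "v2 1 0"] h[of "v2 0 1"] unfolding A B mk_mulv by (simp add: v2_ne0)
qed

end



context loop_setup begin

lemma Tm_dec_T: "y \<in> LL \<Longrightarrow> Tm a c (dec y) \<in> Tset a c"
  using Tm_T LL_dec by blast

lemma Tm_det: "y \<in> LL \<Longrightarrow> det (Tm a c (dec y)) \<noteq> 0"
  using Tset_det Tm_dec_T by blast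

lemma rt_eq: "y \<in> LL \<Longrightarrow> right_transl LL mm y = ph (Tm a c (dec y))"
  by (rule ext) (simp add: right_transl_def ph_def mm_def)

lemma rts_eq: "right_transls LL mm = ph ` Tset a c"
proof
  show "right_transls LL mm \<subseteq> ph ` Tset a c"
    unfolding right_transls_def using rt_eq Tm_dec_T by auto
  show "ph ` Tset a c \<subseteq> right_transls LL mm"
  proof
    fix f assume "f \<in> ph ` Tset a c"
    then obtain t where t: "t \<in> Tset a c" "f = ph t" by auto
    have ne: "t *v e1 \<noteq> 0" by (rule mulv_ne0[OF Tset_det[OF t(1)] e1_ne0])
    have y: "enc (t *v e1) \<in> LL" by (rule enc_LL[OF ne])
    have "right_transl LL mm (enc (t *v e1)) = f"
      using rt_eq[OF y] Tm_uniq[OF t(1)] t(2) by simp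
    then show "f \<in> right_transls LL mm" using y unfolding right_transls_def by blast
  qed
qed

lemma loop: "is_loop LL mm"
  unfolding is_loop_def
proof (intro conjI ballI)
  fix x y assume x: "x \<in> LL" and y: "y \<in> LL"
  show "mm x y \<in> LL" unfolding mm_def by (rule enc_mul_LL[OF Tm_det[OF y] x])
next
  show "\<exists>e\<in>LL. \<forall>x\<in>LL. mm e x = x \<and> mm x e = x"
  proof (intro bexI[of _ "enc e1"] ballI conjI)
    show "enc e1 \<in> LL" by (rule enc_LL[OF e1_ne0])
    fix x assume x: "x \<in> LL"
    show "mm (enc e1) x = x" unfolding mm_def using x by (simp add: Tm_e1 LL_dec)
    show "mm x (enc e1) = x" unfolding mm_def using x by (simp add: Tm_e1_I LL_dec)
  qed
next
  fix u w assume u: "u \<in> LL" and w: "w \<in> LL"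
  obtain t where t: "t \<in> Tset a c" "t *v dec u = dec w"
    using sharp_exist LL_dec[OF u] LL_dec[OF w] by blast
  show "\<exists>!x. x \<in> LL \<and> mm u x = w"
  proof
    have ne: "t *v e1 \<noteq> 0" by (rule mulv_ne0[OF Tset_det[OF t(1)] e1_ne0])
    show "enc (t *v e1) \<in> LL \<and> mm u (enc (t *v e1)) = w"
      using enc_LL[OF ne] unfolding mm_def using Tm_uniq[OF t(1)] t(2) LL_dec[OF w] by simp
    fix x assume "x \<in> LL \<and> mm u x = w"
    then have x: "x \<in> LL" and e: "mm u x = w" by auto
    show "x = enc (t *v e1)"
    proof -
      have "enc (Tm a c (dec x) *v dec u) = enc (dec w)" using e LL_dec[OF w] unfolding mm_def by simp
      then have "Tm a c (dec x) *v dec u = t *v dec u" using t(2) inj_enc by (simp add: inj_eq)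
      then have "Tm a c (dec x) = t" by (rule sharp_unique[OF _ Tm_dec_T[OF x] t(1), rotated]) (use LL_dec[OF u] in auto)
      then have "dec x = t *v e1" using Tm_e1[of "dec x"] by simp
      then show ?thesis using LL_dec[OF x] by metis
    qed
  qed
next
  fix u w assume u: "u \<in> LL" and w: "w \<in> LL"
  define M where "M = Tm a c (dec u)"
  have dM: "det M \<noteq> 0" unfolding M_def by (rule Tm_det[OF u])
  show "\<exists>!y. y \<in> LL \<and> mm y u = w"
  proof
    show "enc (inv2 M *v dec w) \<in> LL \<and> mm (enc (inv2 M *v dec w)) u = w"
      using enc_mul_LL[OF inv2_det[OF dM] w] LL_dec[OF w] unfolding mm_def M_def[symmetric]
      by (simp add: matrix_vector_mul_assoc inv2_right[OF dM])
    fix y assume "y \<in> LL \<and> mm y u = w"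
    then have y: "y \<in> LL" and e: "mm y u = w" by auto
    have "enc (M *v dec y) = enc (dec w)" using e LL_dec[OF w] unfolding mm_def M_def by simp
    then have "M *v dec y = dec w" using inj_enc by (simp add: inj_eq)
    then have "inv2 M *v (M *v dec y) = inv2 M *v dec w" by simp
    then have "dec y = inv2 M *v dec w" by (simp add: matrix_vector_mul_assoc inv2_left[OF dM])
    then show "y = enc (inv2 M *v dec w)" using LL_dec[OF y] by metis
  qed
qed

lemma rcc: "right_conj_closed LL mm"
  unfolding right_conj_closed_def rts_eq
proof (intro ballI)
  fix r s assume "r \<in> ph ` Tset a c" "s \<in> ph ` Tset a c"
  then obtain t1 t2 where t: "t1 \<in> Tset a c" "t2 \<in> Tset a c" "r = ph t1" "s = ph t2" by auto
  interpret group_hom GL2 "BijGroup LL" ph by (rule group_hom_ph)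
  have c1: "t1 \<in> carrier GL2" "t2 \<in> carrier GL2" using Tset_det t by auto
  have i: "inv2 t2 \<in> carrier GL2" using inv2_det c1 by auto
  have m1: "inv2 t2 ** t1 \<in> carrier GL2" using i c1 by (simp add: det_mul)
  have e1: "ph (inv2 t2 ** t1 ** t2) = ph (inv2 t2 ** t1) \<otimes>\<^bsub>BijGroup LL\<^esub> ph t2"
    using hom_mult[OF m1 c1(2)] by simp
  have e2: "ph (inv2 t2 ** t1) = ph (inv2 t2) \<otimes>\<^bsub>BijGroup LL\<^esub> ph t1"
    using hom_mult[OF i c1(1)] by simp
  have e3: "ph (inv2 t2) = inv\<^bsub>BijGroup LL\<^esub> (ph t2)"
    using hom_inv[OF c1(2)] c1 by (simp add: inv_GL2)
  have "inv\<^bsub>BijGroup LL\<^esub> s \<otimes>\<^bsub>BijGroup LL\<^esub> r \<otimes>\<^bsub>BijGroup LL\<^esub> s = ph (inv2 t2 ** t1 ** t2)"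
    unfolding e1 e2 e3 t(3,4) ..
  then show "inv\<^bsub>BijGroup LL\<^esub> s \<otimes>\<^bsub>BijGroup LL\<^esub> r \<otimes>\<^bsub>BijGroup LL\<^esub> s \<in> ph ` Tset a c"
    using conj_T[OF t(1,2)] by simp
qed

end



context loop_setup begin

lemma iso:
  assumes sqc: "\<And>d. d \<noteq> 0 \<Longrightarrow> \<exists>z. d = z * z \<or> d = c * (z * z)"
    and hB: "(\<forall>\<mu>::'a. \<mu> \<noteq> 0 \<longrightarrow> \<mu> * \<mu> = 1) \<Longrightarrow> a \<noteq> 0 \<and> (2::'a) \<noteq> 0"
  shows "right_mult_group LL mm \<cong> (GL2 :: ('a^2^2) monoid)"
proof -
  interpret BG: group "BijGroup LL" by (rule group_BijGroup)
  interpret group_hom GL2 "BijGroup LL" ph by (rule group_hom_ph)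
  define Gen where "Gen = ph ` Tset a c"
  define H where "H = generate (BijGroup LL) Gen"
  have TG: "Tset a c \<subseteq> carrier GL2" using Tset_det by auto
  have gsub: "Gen \<subseteq> carrier (BijGroup LL)" unfolding Gen_def using TG by auto
  have Hsub: "subgroup H (BijGroup LL)" unfolding H_def by (rule BG.generate_is_subgroup[OF gsub])
  have H1: "H \<subseteq> ph ` carrier GL2" unfolding H_def
    by (rule BG.generate_subgroup_incl[OF _ img_is_subgroup]) (use TG in \<open>auto simp: Gen_def\<close>)
  have TH: "t \<in> Tset a c \<Longrightarrow> ph t \<in> H" for t
    unfolding H_def Gen_def by (rule generate.incl) auto
  define S where "S = {A. det A \<noteq> 0 \<and> ph A \<in> H}"
  have gS: "genS S a c"
  proof (unfold_locales)
    show "c \<noteq> 0" by (rule c0)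
    show "\<And>r. r * r - a * r + c \<noteq> 0" by (rule noroot)
    show "\<And>d. d \<noteq> 0 \<Longrightarrow> \<exists>z. d = z * z \<or> d = c * (z * z)" by (rule sqc)
    show "(\<forall>\<mu>::'a. \<mu> \<noteq> 0 \<longrightarrow> \<mu> * \<mu> = 1) \<Longrightarrow> a \<noteq> 0 \<and> (2::'a) \<noteq> 0" by (rule hB)
    show "\<And>A B. A \<in> S \<Longrightarrow> B \<in> S \<Longrightarrow> A ** B \<in> S"
    proof -
      fix A B assume "A \<in> S" "B \<in> S"
      then have A: "A \<in> carrier GL2" "ph A \<in> H" and B: "B \<in> carrier GL2" "ph B \<in> H" by (auto simp: S_def)
      have "ph (A ** B) = ph A \<otimes>\<^bsub>BijGroup LL\<^esub> ph B" using hom_mult[OF A(1) B(1)] by simp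
      then show "A ** B \<in> S" using A B subgroup.m_closed[OF Hsub A(2) B(2)] by (simp add: S_def det_mul)
    qed
    show "\<And>M N X. M \<in> S \<Longrightarrow> N \<in> S \<Longrightarrow> M ** X = N \<Longrightarrow> X \<in> S"
    proof -
      fix M N X assume "M \<in> S" "N \<in> S" and e: "M ** X = N"
      then have M: "M \<in> carrier GL2" "ph M \<in> H" and N: "N \<in> carrier GL2" "ph N \<in> H" by (auto simp: S_def)
      have X: "X \<in> carrier GL2" using M N e det_mul[of M X] by auto
      have "ph N = ph M \<otimes>\<^bsub>BijGroup LL\<^esub> ph X" using hom_mult[OF M(1) X] e by simp
      then have "ph X = inv\<^bsub>BijGroup LL\<^esub> ph M \<otimes>\<^bsub>BijGroup LL\<^esub> ph N"
        using BG.inv_solve_left[of "ph X" "ph M" "ph N"] M N X by simp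
      also have "\<dots> \<in> H" using subgroup.m_closed[OF Hsub subgroup.m_inv_closed[OF Hsub M(2)] N(2)] .
      finally show "X \<in> S" using X by (simp add: S_def)
    qed
    show "\<And>A B X. B \<in> S \<Longrightarrow> A \<in> S \<Longrightarrow> X ** B = A \<Longrightarrow> X \<in> S"
    proof -
      fix A B X assume "B \<in> S" "A \<in> S" and e: "X ** B = A"
      then have A: "A \<in> carrier GL2" "ph A \<in> H" and B: "B \<in> carrier GL2" "ph B \<in> H" by (auto simp: S_def)
      have X: "X \<in> carrier GL2" using A B e det_mul[of X B] by auto
      have "ph A = ph X \<otimes>\<^bsub>BijGroup LL\<^esub> ph B" using hom_mult[OF X B(1)] e by simp
      then have "ph X = ph A \<otimes>\<^bsub>BijGroup LL\<^esub> inv\<^bsub>BijGroup LL\<^esub> ph B"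
        using BG.inv_solve_right[of "ph X" "ph A" "ph B"] A B X by simp
      also have "\<dots> \<in> H" using subgroup.m_closed[OF Hsub A(2) subgroup.m_inv_closed[OF Hsub B(2)]] .
      finally show "X \<in> S" using X by (simp add: S_def)
    qed
    show "\<And>l. l \<noteq> 0 \<Longrightarrow> mk l 0 0 l \<in> S"
    proof -
      fix l :: 'a assume l: "l \<noteq> 0"
      then have "mk l 0 0 l \<in> Tset a c" by (auto simp: Tset_def)
      then show "mk l 0 0 l \<in> S" using TH Tset_det by (simp add: S_def)
    qed
    show "\<And>p q r s. p + s = a \<Longrightarrow> p * s - q * r = c \<Longrightarrow> mk p q r s \<in> S"
    proof -
      fix p q r s :: 'a assume "p + s = a" "p * s - q * r = c"
      then have "mk p q r s \<in> Tset a c" by (auto simp: Tset_def Cm_mk)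
      then show "mk p q r s \<in> S" using TH Tset_det by (simp add: S_def)
    qed
  qed
  have H2: "ph ` carrier GL2 \<subseteq> H"
  proof
    fix f assume "f \<in> ph ` carrier GL2"
    then obtain A where A: "A \<in> carrier GL2" "f = ph A" by auto
    then have "A \<in> S" using genS.all_in[OF gS] by simp
    then show "f \<in> H" using A by (simp add: S_def)
  qed
  have img: "ph ` carrier GL2 = H" using H1 H2 by blast
  have carr: "carrier (right_mult_group LL mm) = H"
    by (simp add: right_mult_group_def H_def Gen_def rts_eq)
  have "ph \<in> iso (GL2 :: ('a^2^2) monoid) (right_mult_group LL mm)"
  proof (rule isoI)
    show "ph \<in> hom GL2 (right_mult_group LL mm)"
      using hom_mult img unfolding hom_def carr
      by (auto simp: right_mult_group_def)
    show "bij_betw ph (carrier GL2) (carrier (right_mult_group LL mm))"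
      unfolding carr bij_betw_def using ph_inj img by simp
  qed
  then have "(GL2 :: ('a^2^2) monoid) \<cong> right_mult_group LL mm" by (rule is_isoI)
  then show ?thesis by (rule group.iso_sym[OF group_GL2])
qed

end



theorem proposition7p1:
  assumes "CARD('a::{field,finite}) > 2"
  shows "\<exists>(L::nat set) m.
           is_loop L m \<and> finite L \<and> card L = CARD('a)^2 - 1 \<and>
           right_conj_closed L m \<and>
           right_mult_group L m \<cong> (GL2 :: ('a ^ 2 ^ 2) monoid)"
proof -
  obtain c :: 'a where c0: "c \<noteq> 0" and sqc: "\<And>d. d \<noteq> 0 \<Longrightarrow> \<exists>z. d = z * z \<or> d = c * (z * z)"
    using exists_c by blast
  obtain a :: 'a where noroot: "\<And>r. r * r - a * r + c \<noteq> 0" using exists_a[OF c0] by blast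
  have hB: "(\<forall>\<mu>::'a. \<mu> \<noteq> 0 \<longrightarrow> \<mu> * \<mu> = 1) \<Longrightarrow> a \<noteq> 0 \<and> (2::'a) \<noteq> 0"
    using caseB[OF assms c0 noroot sqc] by blast
  obtain enc :: "'a^2 \<Rightarrow> nat" and n where "enc ` UNIV = {i. i < n}" "inj_on enc UNIV"
    using finite_imp_inj_to_nat_seg[of "UNIV :: ('a^2) set"] by auto
  then have inj: "inj enc" by simp
  interpret loop_setup a c enc
    by unfold_locales (use c0 noroot inj in auto)
  have fin: "finite LL" by (simp add: LL_def)
  have "card LL = card {v::'a^2. v \<noteq> 0}" unfolding LL_def
    by (rule card_image) (use inj in \<open>auto simp: inj_on_def\<close>)
  also have "\<dots> = card (UNIV - {0::'a^2})" by (rule arg_cong[where f = card]) auto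
  also have "\<dots> = CARD('a^2) - 1" by (simp add: card_Diff_singleton)
  also have "\<dots> = CARD('a)^2 - 1" by (simp add: CARD_vec)
  finally have card: "card LL = CARD('a)^2 - 1" .
  show ?thesis
    using loop fin card rcc iso[OF sqc hB] by blast
qed


end
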